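(* Let $1\le p<\infty$. Every lattice homomorphism on $\ell^p$ (with the coordinatewise order) has a non-trivial closed invariant subspace which is an ideal.
   Context: On $\ell^p$, $x\ge0$ means all coordinates are real and nonnegative, and lattice operations are coordinatewise. A lattice homomorphism is a bounded positive operator $T$ with $T(x\vee y)=Tx\vee Ty$. An ideal is a linear subspace $M$ such that $|x|\le|y|$ coordinatewise and $y\in M$ imply $x\in M$. Non-trivial means different from $\{0\}$ and $\ell^p$. *)

theory Defs
  imports "HOL-Analysis.Analysis"
begin

definition lp :: "real \<Rightarrow> (nat \<Rightarrow> real) set" where
  "lp p = {x. summable (\<lambda>n. \<bar>x n\<bar> powr p)}"

definition lp_norm :: "real \<Rightarrow> (nat \<Rightarrow> real) \<Rightarrow> real" where
  "lp_norm p x = (\<Sum>n. \<bar>x n\<bar> powr p) powr (1 / p)"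

text \<open>Bounded linear operator on l^p (only its values on l^p matter).\<close>
definition lp_bounded_linear :: "real \<Rightarrow> ((nat \<Rightarrow> real) \<Rightarrow> (nat \<Rightarrow> real)) \<Rightarrow> bool" where
  "lp_bounded_linear p T \<longleftrightarrow>
     (\<forall>x\<in>lp p. T x \<in> lp p) \<and>
     (\<forall>x\<in>lp p. \<forall>y\<in>lp p. \<forall>a b::real.
        T (\<lambda>n. a * x n + b * y n) = (\<lambda>n. a * T x n + b * T y n)) \<and>
     (\<exists>C. \<forall>x\<in>lp p. lp_norm p (T x) \<le> C * lp_norm p x)"

definition lp_positive :: "real \<Rightarrow> ((nat \<Rightarrow> real) \<Rightarrow> (nat \<Rightarrow> real)) \<Rightarrow> bool" where
  "lp_positive p T \<longleftrightarrow> (\<forall>x\<in>lp p. (\<forall>n. 0 \<le> x n) \<longrightarrow> (\<forall>n. 0 \<le> T x n))"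

definition lp_lattice_hom :: "real \<Rightarrow> ((nat \<Rightarrow> real) \<Rightarrow> (nat \<Rightarrow> real)) \<Rightarrow> bool" where
  "lp_lattice_hom p T \<longleftrightarrow> lp_bounded_linear p T \<and> lp_positive p T \<and>
     (\<forall>x\<in>lp p. \<forall>y\<in>lp p. T (\<lambda>n. max (x n) (y n)) = (\<lambda>n. max (T x n) (T y n)))"

definition lp_ideal :: "real \<Rightarrow> (nat \<Rightarrow> real) set \<Rightarrow> bool" where
  "lp_ideal p M \<longleftrightarrow> M \<subseteq> lp p \<and> (\<lambda>n. 0) \<in> M \<and>
     (\<forall>x\<in>M. \<forall>y\<in>M. \<forall>a b::real. (\<lambda>n. a * x n + b * y n) \<in> M) \<and>
     (\<forall>x y. y \<in> M \<longrightarrow> (\<forall>n. \<bar>x n\<bar> \<le> \<bar>y n\<bar>) \<longrightarrow> x \<in> M)"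

definition lp_closed :: "real \<Rightarrow> (nat \<Rightarrow> real) set \<Rightarrow> bool" where
  "lp_closed p M \<longleftrightarrow>
     (\<forall>f x. (\<forall>k. f k \<in> M) \<longrightarrow> x \<in> lp p \<longrightarrow>
        (\<lambda>k. lp_norm p (\<lambda>n. f k n - x n)) \<longlonglongrightarrow> 0 \<longrightarrow> x \<in> M)"

end

theory Submission
  imports Defs
begin

lemma lp_zero: "(\<lambda>n. 0) \<in> lp p" unfolding lp_def by simp

lemma lp_dom:
  assumes "p > 0" "x \<in> lp p" "\<And>n. \<bar>y n\<bar> \<le> \<bar>x n\<bar>"
  shows "y \<in> lp p"
proof -
  have "summable (\<lambda>n. \<bar>x n\<bar> powr p)" using assms(2) by (simp add: lp_def)
  moreover have "\<And>n. norm (\<bar>y n\<bar> powr p) \<le> \<bar>x n\<bar> powr p"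
    using assms(1,3) by (simp add: powr_mono2)
  ultimately show ?thesis unfolding lp_def
    by (metis (no_types, lifting) mem_Collect_eq summable_comparison_test')
qed

lemma lp_single: "(\<lambda>k. if k = j then c else 0) \<in> lp p"
proof -
  have "(\<lambda>n. \<bar>if n = j then c else 0\<bar> powr p) = (\<lambda>n. if n \<in> {j} then \<bar>c\<bar> powr p else 0)"
    by auto
  then show ?thesis unfolding lp_def by simp
qed

lemma lp_lin:
  assumes "p > 0" "x \<in> lp p" "y \<in> lp p"
  shows "(\<lambda>n. a * x n + b * y n) \<in> lp p"
proof -
  have sx: "summable (\<lambda>n. \<bar>x n\<bar> powr p)" and sy: "summable (\<lambda>n. \<bar>y n\<bar> powr p)"
    using assms by (auto simp: lp_def)
  have s: "summable (\<lambda>n. 2 powr p * (\<bar>a\<bar> powr p * \<bar>x n\<bar> powr p + \<bar>b\<bar> powr p * \<bar>y n\<bar> powr p))"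
    by (intro summable_mult summable_add sx sy)
  have b: "norm (\<bar>a * x n + b * y n\<bar> powr p) \<le> 2 powr p * (\<bar>a\<bar> powr p * \<bar>x n\<bar> powr p + \<bar>b\<bar> powr p * \<bar>y n\<bar> powr p)" for n
  proof -
    define m where "m = max \<bar>a * x n\<bar> \<bar>b * y n\<bar>"
    have "\<bar>a * x n + b * y n\<bar> \<le> 2 * m" unfolding m_def by linarith
    hence "\<bar>a * x n + b * y n\<bar> powr p \<le> (2 * m) powr p"
      using assms(1) by (simp add: powr_mono2)
    also have "\<dots> = 2 powr p * m powr p" unfolding m_def by (simp add: powr_mult)
    also have "m powr p \<le> \<bar>a * x n\<bar> powr p + \<bar>b * y n\<bar> powr p"
      unfolding m_def by (cases "\<bar>a * x n\<bar> \<le> \<bar>b * y n\<bar>") (auto simp: max_def)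
    hence "2 powr p * m powr p \<le> 2 powr p * (\<bar>a * x n\<bar> powr p + \<bar>b * y n\<bar> powr p)"
      by simp
    finally show ?thesis by (simp add: abs_mult powr_mult)
  qed
  show ?thesis unfolding lp_def
    using summable_comparison_test'[OF s b] by simp
qed

lemma lp_coord:
  assumes "p > 0" "y \<in> lp p"
  shows "\<bar>y n\<bar> \<le> lp_norm p y"
proof -
  have s: "summable (\<lambda>n. \<bar>y n\<bar> powr p)" using assms by (simp add: lp_def)
  have "\<bar>y n\<bar> powr p \<le> (\<Sum>k. \<bar>y k\<bar> powr p)"
    using sum_le_suminf[OF s, of "{n}"] by simp
  hence "(\<bar>y n\<bar> powr p) powr (1/p) \<le> (\<Sum>k. \<bar>y k\<bar> powr p) powr (1/p)"
    using assms(1) by (simp add: powr_mono2)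
  thus ?thesis using assms(1) by (simp add: lp_norm_def powr_powr)
qed


lemma T_lin:
  assumes "lp_bounded_linear p T" "x \<in> lp p" "y \<in> lp p"
  shows "T (\<lambda>n. a * x n + b * y n) = (\<lambda>n. a * T x n + b * T y n)"
  using assms unfolding lp_bounded_linear_def by blast

lemma tail_tendsto:
  assumes "p > 0" "x \<in> lp p"
  shows "(\<lambda>N. lp_norm p (\<lambda>k. if k < N then 0 else x k)) \<longlonglongrightarrow> 0"
proof -
  define f where "f k = \<bar>x k\<bar> powr p" for k
  have s: "summable f" using assms unfolding lp_def f_def[abs_def] by simp
  have eq: "(\<Sum>k. \<bar>if k < N then 0 else x k\<bar> powr p) = suminf f - sum f {..<N}" for N
  proof -
    have s1: "summable (\<lambda>k. if k < N then 0 else f k)"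
      by (rule summable_comparison_test'[OF s]) (auto simp: f_def)
    have s2: "summable (\<lambda>k. if k \<in> {..<N} then f k else 0)" by simp
    have "suminf f = (\<Sum>k. (if k < N then 0 else f k) + (if k \<in> {..<N} then f k else 0))"
      by (intro suminf_cong) auto
    also have "\<dots> = (\<Sum>k. if k < N then 0 else f k) + (\<Sum>k. if k \<in> {..<N} then f k else 0)"
      by (rule suminf_add[OF s1 s2, symmetric])
    also have "(\<Sum>k. if k \<in> {..<N} then f k else 0) = sum f {..<N}"
      using sums_unique[OF sums_If_finite_set[of "{..<N}" f]] by simp
    finally have "suminf f = (\<Sum>k. if k < N then 0 else f k) + sum f {..<N}" .
    moreover have "(\<Sum>k. \<bar>if k < N then 0 else x k\<bar> powr p) = (\<Sum>k. if k < N then 0 else f k)"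
      by (intro suminf_cong) (auto simp: f_def)
    ultimately show ?thesis by simp
  qed
  have "(\<lambda>N. suminf f - sum f {..<N}) \<longlonglongrightarrow> suminf f - suminf f"
    by (intro tendsto_diff tendsto_const summable_LIMSEQ s)
  hence t: "(\<lambda>N. (\<Sum>k. \<bar>if k < N then 0 else x k\<bar> powr p)) \<longlonglongrightarrow> 0"
    unfolding eq by simp
  have "(\<lambda>N. (\<Sum>k. \<bar>if k < N then 0 else x k\<bar> powr p) powr (1/p)) \<longlonglongrightarrow> 0"
  proof (rule tendsto_zero_powrI[OF t tendsto_const])
    have "summable (\<lambda>k. \<bar>if k < N then 0 else x k\<bar> powr p)" for N
      by (rule summable_comparison_test'[OF s]) (auto simp: f_def)
    thus "\<forall>\<^sub>F N in sequentially. 0 \<le> (\<Sum>k. \<bar>if k < N then 0 else x k\<bar> powr p)"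
      by (intro always_eventually allI suminf_nonneg) auto
  qed (use assms in simp)
  thus ?thesis unfolding lp_norm_def .
qed


lemma T_zero:
  assumes "lp_bounded_linear p T"
  shows "T (\<lambda>k. 0) = (\<lambda>k. 0)"
proof -
  have "T (\<lambda>k. 0 * (0::real) + 0 * 0) = (\<lambda>n. 0 * T (\<lambda>k. 0) n + 0 * T (\<lambda>k. 0) n)"
    by (rule T_lin[OF assms lp_zero lp_zero])
  thus ?thesis by simp
qed

lemma key:
  assumes p: "p > 0" and bl: "lp_bounded_linear p T" and pos: "lp_positive p T"
    and x: "x \<in> lp p"
    and h: "\<forall>j. T (\<lambda>k. if k = j then 1 else 0) n > 0 \<longrightarrow> x j = 0"
  shows "T x n = 0"
proof -
  define hN where "hN N = (\<lambda>k. if k < N then x k else 0)" for N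
  define t where "t N = (\<lambda>k. if k < N then 0 else x k)" for N
  define e where "e j = (\<lambda>k::nat. if k = j then (1::real) else 0)" for j
  have hlp: "hN N \<in> lp p" for N
    by (rule lp_dom[OF p x]) (auto simp: hN_def)
  have tlp: "t N \<in> lp p" for N
    by (rule lp_dom[OF p x]) (auto simp: t_def)
  have elp: "e j \<in> lp p" for j unfolding e_def by (rule lp_single)
  have head: "T (hN N) n = 0" for N
  proof (induction N)
    case 0
    have "hN 0 = (\<lambda>k. 0)" by (simp add: hN_def)
    then show ?case using T_zero[OF bl] by simp
  next
    case (Suc N)
    have "hN (Suc N) = (\<lambda>k. 1 * hN N k + x N * e N k)"
      by (rule ext) (auto simp: hN_def e_def less_Suc_eq)
    hence "T (hN (Suc N)) n = T (hN N) n + x N * T (e N) n"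
      using T_lin[OF bl hlp elp, where a=1 and b="x N"] by simp
    moreover have "x N * T (e N) n = 0"
    proof (cases "T (e N) n > 0")
      case True then show ?thesis using h by (simp add: e_def)
    next
      case False
      moreover have "T (e N) n \<ge> 0" using pos elp[of N] unfolding lp_positive_def
        by (auto simp: e_def)
      ultimately show ?thesis by simp
    qed
    ultimately show ?case using Suc by simp
  qed
  obtain C where C: "\<forall>y\<in>lp p. lp_norm p (T y) \<le> C * lp_norm p y"
    using bl unfolding lp_bounded_linear_def by blast
  have bound: "\<bar>T x n\<bar> \<le> C * lp_norm p (t N)" for N
  proof -
    have "x = (\<lambda>k. 1 * hN N k + 1 * t N k)" by (auto simp: hN_def t_def)
    hence "T x = (\<lambda>m. 1 * T (hN N) m + 1 * T (t N) m)"
      using T_lin[OF bl hlp tlp, where a=1 and b=1] by simp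
    hence "T x n = T (t N) n" using head by simp
    also have "\<bar>\<dots>\<bar> \<le> lp_norm p (T (t N))"
      by (rule lp_coord[OF p]) (use bl tlp in \<open>auto simp: lp_bounded_linear_def\<close>)
    also have "\<dots> \<le> C * lp_norm p (t N)" using C tlp by blast
    finally show ?thesis .
  qed
  have "(\<lambda>N. C * lp_norm p (t N)) \<longlonglongrightarrow> C * 0"
    by (intro tendsto_mult tendsto_const) (use tail_tendsto[OF p x] in \<open>simp add: t_def\<close>)
  hence "\<bar>T x n\<bar> \<le> 0"
    by (intro LIMSEQ_le_const[of _ 0]) (use bound in auto)
  thus ?thesis by simp
qed


theorem corollary3p6:
  fixes p :: real and T :: "(nat \<Rightarrow> real) \<Rightarrow> (nat \<Rightarrow> real)"
  assumes "1 \<le> p" and "lp_lattice_hom p T"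
  shows "\<exists>M. lp_ideal p M \<and> lp_closed p M \<and> (\<forall>x\<in>M. T x \<in> M) \<and>
             M \<noteq> {\<lambda>n. 0} \<and> M \<noteq> lp p"
proof -
  have p: "p > 0" using assms(1) by simp
  have bl: "lp_bounded_linear p T" and pos: "lp_positive p T"
    and lat: "\<forall>x\<in>lp p. \<forall>y\<in>lp p. T (\<lambda>n. max (x n) (y n)) = (\<lambda>n. max (T x n) (T y n))"
    using assms(2) unfolding lp_lattice_hom_def by auto
  define e where "e j = (\<lambda>k::nat. if k = j then (1::real) else 0)" for j
  have elp: "e j \<in> lp p" for j unfolding e_def by (rule lp_single)
  define R where "R n j \<longleftrightarrow> T (e j) n > 0" for n j
  have uniq: "i = j" if "R n i" "R n j" for n i j
  proof (rule ccontr)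
    assume ne: "i \<noteq> j"
    have "(\<lambda>k. max (e i k) (e j k)) = (\<lambda>k. 1 * e i k + 1 * e j k)"
      using ne by (auto simp: e_def)
    moreover have "T (\<lambda>k. max (e i k) (e j k)) = (\<lambda>k. max (T (e i) k) (T (e j) k))"
      using lat elp by blast
    moreover have "T (\<lambda>k. 1 * e i k + 1 * e j k) = (\<lambda>k. 1 * T (e i) k + 1 * T (e j) k)"
      by (rule T_lin[OF bl elp elp])
    ultimately have "(\<lambda>k. max (T (e i) k) (T (e j) k)) = (\<lambda>k. 1 * T (e i) k + 1 * T (e j) k)"
      by simp
    from fun_cong[OF this, of n]
    have "max (T (e i) n) (T (e j) n) = T (e i) n + T (e j) n" by simp
    thus False using that unfolding R_def by (simp add: max_def split: if_splits)
  qed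
  obtain C where Cne: "C \<noteq> {}" and CU: "C \<noteq> UNIV"
    and closed: "\<And>n j. n \<in> C \<Longrightarrow> R n j \<Longrightarrow> j \<in> C"
  proof (cases "\<exists>d. \<forall>j. \<not> R d j")
    case True
    then obtain d where "\<forall>j. \<not> R d j" by blast
    moreover have "{d} \<noteq> (UNIV :: nat set)" using Suc_n_not_n by blast
    ultimately show ?thesis using that[of "{d}"] by blast
  next
    case False
    define \<sigma> where "\<sigma> n = (SOME j. R n j)" for n
    have R\<sigma>: "R n (\<sigma> n)" for n using False unfolding \<sigma>_def by (metis someI_ex)
    define C where "C = range (\<lambda>m. (\<sigma> ^^ Suc m) 0)"
    have cl: "j \<in> C" if nC: "n \<in> C" and Rnj: "R n j" for n j
    proof -
      obtain m where n: "n = (\<sigma> ^^ Suc m) 0" using nC unfolding C_def by blast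
      have "j = \<sigma> n" using uniq[OF Rnj R\<sigma>] .
      hence "j = (\<sigma> ^^ Suc (Suc m)) 0" using n by simp
      thus ?thesis unfolding C_def by blast
    qed
    have "C \<noteq> UNIV"
    proof
      assume CU: "C = UNIV"
      have "0 \<in> C" using CU by simp
      then obtain m where m: "(\<sigma> ^^ Suc m) 0 = 0" unfolding C_def
        by (auto simp del: funpow.simps)
      have "C \<subseteq> (\<lambda>i. (\<sigma> ^^ i) 0) ` {..<Suc m}"
      proof
        fix y assume "y \<in> C"
        then obtain k where y: "y = (\<sigma> ^^ Suc k) 0" unfolding C_def by blast
        have eq: "(\<sigma> ^^ (Suc k mod Suc m)) 0 = (\<sigma> ^^ Suc k) 0" by (rule funpow_mod_eq[OF m])
        show "y \<in> (\<lambda>i. (\<sigma> ^^ i) 0) ` {..<Suc m}" unfolding y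
          by (rule image_eqI[of _ _ "Suc k mod Suc m"]) (use eq in \<open>simp_all del: funpow.simps\<close>)
      qed
      hence "finite C" by (meson finite_imageI finite_lessThan finite_subset)
      thus False using CU by simp
    qed
    moreover have "C \<noteq> {}" unfolding C_def by simp
    ultimately show ?thesis using that cl by blast
  qed
  define M where "M = {x \<in> lp p. \<forall>n\<in>C. x n = 0}"
  have ideal: "lp_ideal p M"
    unfolding lp_ideal_def
  proof (intro conjI allI ballI impI)
    show "M \<subseteq> lp p" unfolding M_def by auto
    show "(\<lambda>n. 0) \<in> M" unfolding M_def using lp_zero by auto
    fix x y a b assume "x \<in> M" "y \<in> M"
    then show "(\<lambda>n. a * x n + b * y n) \<in> M" unfolding M_def using lp_lin[OF p] by auto
  next
    fix x y assume y: "y \<in> M" and le: "\<forall>n. \<bar>x n\<bar> \<le> \<bar>y n\<bar>"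
    have "x \<in> lp p" using y le lp_dom[OF p] unfolding M_def by blast
    moreover have "\<forall>n\<in>C. x n = 0" using y le unfolding M_def
      by (metis (mono_tags, lifting) abs_0 abs_le_zero_iff mem_Collect_eq)
    ultimately show "x \<in> M" unfolding M_def by blast
  qed
  have cl: "lp_closed p M"
    unfolding lp_closed_def
  proof (intro allI impI)
    fix f x assume f: "\<forall>k. f k \<in> M" and x: "x \<in> lp p"
      and lim: "(\<lambda>k. lp_norm p (\<lambda>n. f k n - x n)) \<longlonglongrightarrow> 0"
    have "x n = 0" if n: "n \<in> C" for n
    proof -
      have "\<bar>x n\<bar> \<le> lp_norm p (\<lambda>n. f k n - x n)" for k
      proof -
        have fk: "f k \<in> lp p" "f k n = 0" using f n unfolding M_def by auto
        have "(\<lambda>m. 1 * f k m + (-1) * x m) \<in> lp p" by (rule lp_lin[OF p fk(1) x])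
        hence "(\<lambda>m. f k m - x m) \<in> lp p" by simp
        from lp_coord[OF p this, of n] fk(2) show ?thesis by simp
      qed
      hence "\<bar>x n\<bar> \<le> 0" by (intro LIMSEQ_le_const[OF lim]) auto
      thus ?thesis by simp
    qed
    thus "x \<in> M" using x unfolding M_def by blast
  qed
  have inv: "\<forall>x\<in>M. T x \<in> M"
  proof
    fix x assume x: "x \<in> M"
    have "T x \<in> lp p" using x bl unfolding M_def lp_bounded_linear_def by blast
    moreover have "T x n = 0" if n: "n \<in> C" for n
    proof (rule key[OF p bl pos])
      show "x \<in> lp p" using x unfolding M_def by blast
      show "\<forall>j. 0 < T (\<lambda>k. if k = j then 1 else 0) n \<longrightarrow> x j = 0"
        using x closed[OF n] unfolding M_def R_def e_def by blast
    qed
    ultimately show "T x \<in> M" unfolding M_def by blast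
  qed
  obtain k where k: "k \<notin> C" using CU by blast
  obtain c where c: "c \<in> C" using Cne by blast
  have "e k \<in> M" using k elp unfolding M_def e_def by auto
  moreover have "e k \<noteq> (\<lambda>n. 0)" unfolding e_def by (metis zero_neq_one)
  ultimately have ne0: "M \<noteq> {\<lambda>n. 0}" by blast
  have "e c \<notin> M" using c unfolding M_def e_def by auto
  hence neU: "M \<noteq> lp p" using elp by blast
  show ?thesis using ideal cl inv ne0 neU by blast
qed

end
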